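(* Let $p,q\ge2$, $f(z,w)=z^p+w^q$, and let $a,b\in\mathbb{C}\setminus\{0\}$. Let $c_1,c_2\in\mathbb{C}\setminus\{0\}$ satisfy $c_1^p=a\bar c_1$ and $c_2^q=b\bar c_2$, and put $\mu=a\bar c_1/(b\bar c_2)$. If $P(u,v;\mu)=\mu(u^p+\bar u)+v^q+\bar v$ is an excellent map $\mathbb{R}^4\to\mathbb{R}^2$, then there exists a linear deformation $f_t$, $t\in[0,1]$, of $f$ consisting of excellent maps for $t\in(0,1]$ and satisfying $f_1(z,w)=f(z,w)+a\bar z+b\bar w$. Moreover, if $P$ has no definite fold, then neither does $f_t$ for any $t\in(0,1]$.
   Context: A linear deformation of $f$ is a family $f_t(z,w)=f(z,w)+a_1(t)z+b_1(t)w+a_2(t)\bar z+b_2(t)\bar w$, $t\in[0,1]$, with $a_1,b_1,a_2,b_2$ real-analytic complex-valued functions of $t$ vanishing at $t=0$. A smooth map $g:X^4\to Y^2$ is an excellent map if for every point there are local coordinates centered at it and its image in which $g$ is one of: $(x_1,x_2)$; $(x_1,x_2^2+x_3^2+x_4^2)$ (definite fold); $(x_1,x_2^2+x_3^2-x_4^2)$ (indefinite fold); $(x_1,x_2^2\pm x_3^2+x_1x_4+x_4^3)$ (cusp). *)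

theory Defs
  imports "HOL-Analysis.Analysis"
begin

fun iter_dd :: "('a::real_normed_vector \<Rightarrow> 'b::real_normed_vector) \<Rightarrow> 'a list \<Rightarrow> 'a \<Rightarrow> 'b" where
  "iter_dd f [] = f"
| "iter_dd f (v # vs) = (\<lambda>x. frechet_derivative (iter_dd f vs) (at x) v)"

definition smooth_on :: "'a::real_normed_vector set \<Rightarrow> ('a \<Rightarrow> 'b::real_normed_vector) \<Rightarrow> bool" where
  "smooth_on S f \<longleftrightarrow> open S \<and> (\<forall>vs. \<forall>x\<in>S. iter_dd f vs differentiable (at x))"

definition diffeo_onto :: "'a::real_normed_vector set \<Rightarrow> 'b::real_normed_vector set \<Rightarrow> ('a \<Rightarrow> 'b) \<Rightarrow> bool" where
  "diffeo_onto U V \<phi> \<longleftrightarrow> open U \<and> open V \<and> bij_betw \<phi> U V \<and> smooth_on U \<phi> \<and> smooth_on V (inv_into U \<phi>)"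

type_synonym R4 = "real \<times> real \<times> real \<times> real"
type_synonym R2 = "real \<times> real"

definition locally_of_form ::
  "('a::real_normed_vector \<Rightarrow> 'b::real_normed_vector) \<Rightarrow> 'a \<Rightarrow> (R4 \<Rightarrow> R2) \<Rightarrow> bool" where
  "locally_of_form g x N \<longleftrightarrow>
     (\<exists>U V (\<phi>::'a \<Rightarrow> R4) (\<psi>::'b \<Rightarrow> R2).
        x \<in> U \<and> g x \<in> V \<and> g ` U \<subseteq> V \<and>
        diffeo_onto U (\<phi> ` U) \<phi> \<and> \<phi> x = 0 \<and>
        diffeo_onto V (\<psi> ` V) \<psi> \<and> \<psi> (g x) = 0 \<and>
        (\<forall>y\<in>U. \<psi> (g y) = N (\<phi> y)))"

definition regular_form :: "R4 \<Rightarrow> R2" where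
  "regular_form = (\<lambda>(x1, x2, x3, x4). (x1, x2))"
definition definite_fold_form :: "R4 \<Rightarrow> R2" where
  "definite_fold_form = (\<lambda>(x1, x2, x3, x4). (x1, x2^2 + x3^2 + x4^2))"
definition indefinite_fold_form :: "R4 \<Rightarrow> R2" where
  "indefinite_fold_form = (\<lambda>(x1, x2, x3, x4). (x1, x2^2 + x3^2 - x4^2))"
definition cusp_plus_form :: "R4 \<Rightarrow> R2" where
  "cusp_plus_form = (\<lambda>(x1, x2, x3, x4). (x1, x2^2 + x3^2 + x1 * x4 + x4^3))"
definition cusp_minus_form :: "R4 \<Rightarrow> R2" where
  "cusp_minus_form = (\<lambda>(x1, x2, x3, x4). (x1, x2^2 - x3^2 + x1 * x4 + x4^3))"

definition excellent :: "(complex \<times> complex \<Rightarrow> complex) \<Rightarrow> bool" where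
  "excellent g \<longleftrightarrow> smooth_on UNIV g \<and>
     (\<forall>x. \<exists>N \<in> {regular_form, definite_fold_form, indefinite_fold_form,
                  cusp_plus_form, cusp_minus_form}. locally_of_form g x N)"

definition has_definite_fold :: "(complex \<times> complex \<Rightarrow> complex) \<Rightarrow> bool" where
  "has_definite_fold g \<longleftrightarrow> (\<exists>x. locally_of_form g x definite_fold_form)"

definition real_analytic_on :: "real set \<Rightarrow> (real \<Rightarrow> complex) \<Rightarrow> bool" where
  "real_analytic_on S a \<longleftrightarrow>
     (\<forall>t\<in>S. \<exists>r>0. \<exists>c::nat \<Rightarrow> complex.
        \<forall>s\<in>S. \<bar>s - t\<bar> < r \<longrightarrow> (\<lambda>n. c n * complex_of_real ((s - t) ^ n)) sums a s)"

definition lin_def ::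
  "(complex \<Rightarrow> complex \<Rightarrow> complex) \<Rightarrow> (real \<Rightarrow> complex) \<Rightarrow> (real \<Rightarrow> complex) \<Rightarrow>
   (real \<Rightarrow> complex) \<Rightarrow> (real \<Rightarrow> complex) \<Rightarrow> real \<Rightarrow> complex \<times> complex \<Rightarrow> complex" where
  "lin_def f a1 b1 a2 b2 t = (\<lambda>(z, w). f z w + a1 t * z + b1 t * w + a2 t * cnj z + b2 t * cnj w)"

definition is_linear_deformation ::
  "(real \<Rightarrow> complex) \<Rightarrow> (real \<Rightarrow> complex) \<Rightarrow> (real \<Rightarrow> complex) \<Rightarrow> (real \<Rightarrow> complex) \<Rightarrow> bool" where
  "is_linear_deformation a1 b1 a2 b2 \<longleftrightarrow>
     real_analytic_on {0..1} a1 \<and> real_analytic_on {0..1} b1 \<and>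
     real_analytic_on {0..1} a2 \<and> real_analytic_on {0..1} b2 \<and>
     a1 0 = 0 \<and> b1 0 = 0 \<and> a2 0 = 0 \<and> b2 0 = 0"

end

theory Submission
  imports Defs
begin


lemma deriv_local:
  assumes "open S" "x \<in> S" "\<And>y. y \<in> S \<Longrightarrow> f y = g y" "f differentiable (at x)"
  shows "frechet_derivative g (at x) = frechet_derivative f (at x) \<and> g differentiable (at x)"
proof -
  have "(f has_derivative frechet_derivative f (at x)) (at x)"
    using assms(4) frechet_derivative_works by blast
  then have h: "(g has_derivative frechet_derivative f (at x)) (at x)"
    using has_derivative_transform_within_open[OF _ assms(1,2)] assms(3) by blast
  then show ?thesis using frechet_derivative_at differentiable_def by metis
qed

lemma smooth_cong:
  assumes "smooth_on S f" "\<And>x. x \<in> S \<Longrightarrow> f x = g x"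
  shows "smooth_on S g"
proof -
  have o: "open S" using assms(1) smooth_on_def by blast
  have eq: "\<forall>x\<in>S. iter_dd g vs x = iter_dd f vs x" for vs
  proof (induction vs)
    case Nil then show ?case using assms(2) by simp
  next
    case (Cons v vs)
    show ?case
    proof
      fix x assume x: "x \<in> S"
      have "iter_dd f vs differentiable (at x)" using assms(1) x smooth_on_def by blast
      then have "frechet_derivative (iter_dd g vs) (at x) = frechet_derivative (iter_dd f vs) (at x)"
        using deriv_local[OF o x, of "iter_dd f vs" "iter_dd g vs"] Cons by auto
      then show "iter_dd g (v # vs) x = iter_dd f (v # vs) x" by simp
    qed
  qed
  have "iter_dd g vs differentiable (at x)" if "x \<in> S" for vs x
    using deriv_local[OF o that, of "iter_dd f vs" "iter_dd g vs"] eq assms(1) that smooth_on_def by metis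
  then show ?thesis using o smooth_on_def by blast
qed

lemma smooth_pre:
  assumes L: "bounded_linear L" and f: "smooth_on S f" and T: "open T" "L ` T \<subseteq> S"
  shows "smooth_on T (\<lambda>x. f (L x))"
proof -
  have hL: "\<And>x. (L has_derivative L) (at x)" using L bounded_linear_imp_has_derivative by blast
  have eq: "\<forall>x\<in>T. iter_dd (\<lambda>x. f (L x)) vs x = iter_dd f (map L vs) (L x)" for vs
  proof (induction vs)
    case Nil then show ?case by simp
  next
    case (Cons v vs)
    show ?case
    proof
      fix x assume x: "x \<in> T"
      let ?g = "iter_dd f (map L vs)"
      have "?g differentiable (at (L x))" using f x T smooth_on_def by blast
      then have "(?g has_derivative frechet_derivative ?g (at (L x))) (at (L x))"
        using frechet_derivative_works by blast
      from diff_chain_at[OF hL this]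
      have "((\<lambda>y. ?g (L y)) has_derivative (\<lambda>v. frechet_derivative ?g (at (L x)) (L v))) (at x)"
        by (simp add: o_def)
      then have "(iter_dd (\<lambda>x. f (L x)) vs has_derivative (\<lambda>v. frechet_derivative ?g (at (L x)) (L v))) (at x)"
        by (rule has_derivative_transform_within_open[OF _ T(1) x]) (use Cons in simp)
      then have "frechet_derivative (iter_dd (\<lambda>x. f (L x)) vs) (at x) = (\<lambda>v. frechet_derivative ?g (at (L x)) (L v))"
        using frechet_derivative_at by metis
      then show "iter_dd (\<lambda>x. f (L x)) (v # vs) x = iter_dd f (map L (v # vs)) (L x)" by simp
    qed
  qed
  have "iter_dd (\<lambda>x. f (L x)) vs differentiable (at x)" if x: "x \<in> T" for vs x
  proof -
    let ?g = "iter_dd f (map L vs)"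
    have "?g differentiable (at (L x))" using f x T smooth_on_def by blast
    then have "(?g has_derivative frechet_derivative ?g (at (L x))) (at (L x))"
      using frechet_derivative_works by blast
    from diff_chain_at[OF hL this]
    have "((\<lambda>y. ?g (L y)) has_derivative (\<lambda>v. frechet_derivative ?g (at (L x)) (L v))) (at x)"
      by (simp add: o_def)
    then have "(iter_dd (\<lambda>x. f (L x)) vs has_derivative (\<lambda>v. frechet_derivative ?g (at (L x)) (L v))) (at x)"
      by (rule has_derivative_transform_within_open[OF _ T(1) x]) (use eq in simp)
    then show ?thesis using differentiable_def by blast
  qed
  then show ?thesis using T smooth_on_def by blast
qed

lemma smooth_post:
  assumes M: "bounded_linear M" and f: "smooth_on S f"
  shows "smooth_on S (\<lambda>x. M (f x))"
proof -
  have o: "open S" using f smooth_on_def by blast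
  have hM: "\<And>x. (M has_derivative M) (at x)" using M bounded_linear_imp_has_derivative by blast
  have eq: "\<forall>x\<in>S. iter_dd (\<lambda>x. M (f x)) vs x = M (iter_dd f vs x)" for vs
  proof (induction vs)
    case Nil then show ?case by simp
  next
    case (Cons v vs)
    show ?case
    proof
      fix x assume x: "x \<in> S"
      let ?g = "iter_dd f vs"
      have "?g differentiable (at x)" using f x smooth_on_def by blast
      then have "(?g has_derivative frechet_derivative ?g (at x)) (at x)"
        using frechet_derivative_works by blast
      from diff_chain_at[OF this hM]
      have "((\<lambda>y. M (?g y)) has_derivative (\<lambda>v. M (frechet_derivative ?g (at x) v))) (at x)"
        by (simp add: o_def)
      then have "(iter_dd (\<lambda>x. M (f x)) vs has_derivative (\<lambda>v. M (frechet_derivative ?g (at x) v))) (at x)"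
        by (rule has_derivative_transform_within_open[OF _ o x]) (use Cons in simp)
      then have "frechet_derivative (iter_dd (\<lambda>x. M (f x)) vs) (at x) = (\<lambda>v. M (frechet_derivative ?g (at x) v))"
        using frechet_derivative_at by metis
      then show "iter_dd (\<lambda>x. M (f x)) (v # vs) x = M (iter_dd f (v # vs) x)" by simp
    qed
  qed
  have "iter_dd (\<lambda>x. M (f x)) vs differentiable (at x)" if x: "x \<in> S" for vs x
  proof -
    let ?g = "iter_dd f vs"
    have "?g differentiable (at x)" using f x smooth_on_def by blast
    then have "(?g has_derivative frechet_derivative ?g (at x)) (at x)"
      using frechet_derivative_works by blast
    from diff_chain_at[OF this hM]
    have "((\<lambda>y. M (?g y)) has_derivative (\<lambda>v. M (frechet_derivative ?g (at x) v))) (at x)"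
      by (simp add: o_def)
    then have "(iter_dd (\<lambda>x. M (f x)) vs has_derivative (\<lambda>v. M (frechet_derivative ?g (at x) v))) (at x)"
      by (rule has_derivative_transform_within_open[OF _ o x]) (use eq in simp)
    then show ?thesis using differentiable_def by blast
  qed
  then show ?thesis using o smooth_on_def by blast
qed



lemma lof_transfer:
  fixes g :: "'a::real_normed_vector \<Rightarrow> 'b::real_normed_vector"
  assumes L: "bounded_linear L" "bounded_linear Li" "\<And>x. L (Li x) = x" "\<And>x. Li (L x) = x"
    and M: "bounded_linear M" "bounded_linear Mi" "\<And>x. M (Mi x) = x" "\<And>x. Mi (M x) = x"
    and lf: "locally_of_form g y N"
  shows "locally_of_form (\<lambda>z. M (g (L z))) (Li y) N"
proof -
  obtain U V and \<phi> :: "'a \<Rightarrow> R4" and \<psi> :: "'b \<Rightarrow> R2" where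
    h: "y \<in> U" "g y \<in> V" "g ` U \<subseteq> V" "diffeo_onto U (\<phi> ` U) \<phi>" "\<phi> y = 0"
       "diffeo_onto V (\<psi> ` V) \<psi>" "\<psi> (g y) = 0" "\<forall>y\<in>U. \<psi> (g y) = N (\<phi> y)"
    using lf unfolding locally_of_form_def by blast
  define U' where "U' = L -` U"
  define V' where "V' = Mi -` V"
  define \<phi>' where "\<phi>' = (\<lambda>z. \<phi> (L z))"
  define \<psi>' where "\<psi>' = (\<lambda>z. \<psi> (Mi z))"
  have oU: "open U" "open (\<phi> ` U)" "bij_betw \<phi> U (\<phi> ` U)" "smooth_on U \<phi>" "smooth_on (\<phi> ` U) (inv_into U \<phi>)"
    using h(4) unfolding diffeo_onto_def by auto
  have oV: "open V" "open (\<psi> ` V)" "bij_betw \<psi> V (\<psi> ` V)" "smooth_on V \<psi>" "smooth_on (\<psi> ` V) (inv_into V \<psi>)"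
    using h(6) unfolding diffeo_onto_def by auto
  have oU': "open U'" unfolding U'_def
    by (rule continuous_open_vimage[OF oU(1)]) (rule linear_continuous_at[OF L(1)])
  have oV': "open V'" unfolding V'_def
    by (rule continuous_open_vimage[OF oV(1)]) (rule linear_continuous_at[OF M(2)])
  have imU: "L ` U' = U" unfolding U'_def using surjI[of L Li] L(3) surj_image_vimage_eq by metis
  have imV: "Mi ` V' = V" unfolding V'_def using surjI[of Mi M] M(4) surj_image_vimage_eq by metis
  have imU2: "\<phi>' ` U' = \<phi> ` U" unfolding \<phi>'_def using imU by (metis image_image)
  have imV2: "\<psi>' ` V' = \<psi> ` V" unfolding \<psi>'_def using imV by (metis image_image)
  have injL: "inj L" using L(4) by (metis injI)
  have injMi: "inj Mi" using M(3) by (metis injI)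
  have bijU': "bij_betw \<phi>' U' (\<phi> ` U)"
  proof -
    have "bij_betw L U' U" using injL imU by (metis bij_betw_imageI inj_on_subset subset_UNIV)
    then show ?thesis unfolding \<phi>'_def using bij_betw_trans[OF _ oU(3)] by (simp add: o_def)
  qed
  have bijV': "bij_betw \<psi>' V' (\<psi> ` V)"
  proof -
    have "bij_betw Mi V' V" using injMi imV by (metis bij_betw_imageI inj_on_subset subset_UNIV)
    then show ?thesis unfolding \<psi>'_def using bij_betw_trans[OF _ oV(3)] by (simp add: o_def)
  qed
  have sU': "smooth_on U' \<phi>'" unfolding \<phi>'_def
    using smooth_pre[OF L(1) oU(4) oU'] imU by blast
  have sV': "smooth_on V' \<psi>'" unfolding \<psi>'_def
    using smooth_pre[OF M(2) oV(4) oV'] imV by blast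
  have iU: "smooth_on (\<phi> ` U) (inv_into U' \<phi>')"
  proof (rule smooth_cong[OF smooth_post[OF L(2) oU(5)]])
    fix w assume w: "w \<in> \<phi> ` U"
    have inj: "inj_on \<phi>' U'" using bijU' bij_betw_def by blast
    have a: "inv_into U \<phi> w \<in> U" using w by (simp add: inv_into_into)
    have b: "\<phi> (inv_into U \<phi> w) = w" using w by (simp add: f_inv_into_f)
    show "Li (inv_into U \<phi> w) = inv_into U' \<phi>' w"
      by (rule inv_into_f_eq[symmetric, OF inj]) (use a b L(3) in \<open>auto simp: U'_def \<phi>'_def\<close>)
  qed
  have iV: "smooth_on (\<psi> ` V) (inv_into V' \<psi>')"
  proof (rule smooth_cong[OF smooth_post[OF M(1) oV(5)]])
    fix w assume w: "w \<in> \<psi> ` V"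
    have inj: "inj_on \<psi>' V'" using bijV' bij_betw_def by blast
    have a: "inv_into V \<psi> w \<in> V" using w by (simp add: inv_into_into)
    have b: "\<psi> (inv_into V \<psi> w) = w" using w by (simp add: f_inv_into_f)
    show "M (inv_into V \<psi> w) = inv_into V' \<psi>' w"
      by (rule inv_into_f_eq[symmetric, OF inj]) (use a b M(4) in \<open>auto simp: V'_def \<psi>'_def\<close>)
  qed
  have dU: "diffeo_onto U' (\<phi>' ` U') \<phi>'"
    unfolding diffeo_onto_def imU2 using oU' oU(2) bijU' sU' iU by blast
  have dV: "diffeo_onto V' (\<psi>' ` V') \<psi>'"
    unfolding diffeo_onto_def imV2 using oV' oV(2) bijV' sV' iV by blast
  show ?thesis unfolding locally_of_form_def
  proof (intro exI conjI)
    show "Li y \<in> U'" using h(1) L(3) by (simp add: U'_def)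
    show "M (g (L (Li y))) \<in> V'" using h(2) L(3) M(4) by (simp add: V'_def)
    show "(\<lambda>z. M (g (L z))) ` U' \<subseteq> V'" using h(3) M(4) by (auto simp: U'_def V'_def)
    show "diffeo_onto U' (\<phi>' ` U') \<phi>'" by (rule dU)
    show "\<phi>' (Li y) = 0" using h(5) L(3) by (simp add: \<phi>'_def)
    show "diffeo_onto V' (\<psi>' ` V') \<psi>'" by (rule dV)
    show "\<psi>' (M (g (L (Li y)))) = 0" using h(7) L(3) M(4) by (simp add: \<psi>'_def)
    show "\<forall>z\<in>U'. \<psi>' (M (g (L z))) = N (\<phi>' z)" using h(8) M(4) by (simp add: U'_def \<psi>'_def \<phi>'_def)
  qed
qed



lemma ra_monom: "real_analytic_on S (\<lambda>s. A * complex_of_real (s ^ n))"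
  unfolding real_analytic_on_def
proof (intro ballI exI conjI allI impI)
  fix t s assume "t \<in> S"
  define c where "c = (\<lambda>k. if k \<le> n then A * complex_of_real (of_nat (n choose k) * t ^ (n - k)) else 0)"
  show "(1::real) > 0" by simp
  have "(\<lambda>k. c k * complex_of_real ((s - t) ^ k)) sums (\<Sum>k\<le>n. c k * complex_of_real ((s - t) ^ k))"
    by (rule sums_finite) (auto simp: c_def)
  moreover have "(\<Sum>k\<le>n. c k * complex_of_real ((s - t) ^ k)) = A * complex_of_real (s ^ n)"
  proof -
    have "s ^ n = ((s - t) + t) ^ n" by simp
    also have "\<dots> = (\<Sum>k\<le>n. of_nat (n choose k) * (s - t) ^ k * t ^ (n - k))" by (rule binomial_ring)
    finally have "A * complex_of_real (s ^ n) = (\<Sum>k\<le>n. A * complex_of_real (of_nat (n choose k) * (s - t) ^ k * t ^ (n - k)))"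
      by (simp add: sum_distrib_left)
    also have "\<dots> = (\<Sum>k\<le>n. c k * complex_of_real ((s - t) ^ k))"
      by (rule sum.cong) (auto simp: c_def mult_ac)
    finally show ?thesis by simp
  qed
  ultimately show "(\<lambda>k. c k * complex_of_real ((s - t) ^ k)) sums (A * complex_of_real (s ^ n))" by simp
qed

lemma ra_zero: "real_analytic_on S (\<lambda>s. 0)"
  using ra_monom[of S 0 0] by simp

theorem lemma3p1:
  fixes p q :: nat and a b c1 c2 :: complex
  assumes "p \<ge> 2" and "q \<ge> 2"
    and "a \<noteq> 0" and "b \<noteq> 0"
    and "c1 \<noteq> 0" and "c2 \<noteq> 0"
    and "c1 ^ p = a * cnj c1" and "c2 ^ q = b * cnj c2"
    and "excellent (\<lambda>(u, v). (a * cnj c1 / (b * cnj c2)) * (u ^ p + cnj u) + v ^ q + cnj v)"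
  shows "\<exists>a1 b1 a2 b2. is_linear_deformation a1 b1 a2 b2 \<and>
           (\<forall>t\<in>{0<..1}. excellent (lin_def (\<lambda>z w. z ^ p + w ^ q) a1 b1 a2 b2 t)) \<and>
           lin_def (\<lambda>z w. z ^ p + w ^ q) a1 b1 a2 b2 1 = (\<lambda>(z, w). z ^ p + w ^ q + a * cnj z + b * cnj w) \<and>
           (\<not> has_definite_fold (\<lambda>(u, v). (a * cnj c1 / (b * cnj c2)) * (u ^ p + cnj u) + v ^ q + cnj v) \<longrightarrow>
              (\<forall>t\<in>{0<..1}. \<not> has_definite_fold (lin_def (\<lambda>z w. z ^ p + w ^ q) a1 b1 a2 b2 t)))"
proof -
  define P where "P = (\<lambda>(u, v). (a * cnj c1 / (b * cnj c2)) * (u ^ p + cnj u) + v ^ q + cnj v)"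
  define a2 where "a2 = (\<lambda>t. a * complex_of_real (t ^ ((p - 1) * q)))"
  define b2 where "b2 = (\<lambda>t. b * complex_of_real (t ^ ((q - 1) * p)))"
  define F where "F = lin_def (\<lambda>z w. z ^ p + w ^ q) (\<lambda>_. 0) (\<lambda>_. 0) a2 b2"
  have def: "is_linear_deformation (\<lambda>_. 0) (\<lambda>_. 0) a2 b2"
    unfolding is_linear_deformation_def
  proof (intro conjI)
    show "real_analytic_on {0..1} a2" unfolding a2_def by (rule ra_monom)
    show "real_analytic_on {0..1} b2" unfolding b2_def by (rule ra_monom)
    show "a2 0 = 0" "b2 0 = 0" using assms(1,2) by (simp_all add: a2_def b2_def)
  qed (simp_all add: ra_zero)
  have one: "F 1 = (\<lambda>(z, w). z ^ p + w ^ q + a * cnj z + b * cnj w)"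
    unfolding F_def lin_def_def a2_def b2_def by simp
  have key: "\<exists>L Li M Mi. bounded_linear L \<and> bounded_linear Li \<and> (\<forall>x. L (Li x) = x) \<and> (\<forall>x. Li (L x) = x)
     \<and> bounded_linear M \<and> bounded_linear Mi \<and> (\<forall>x. M (Mi x) = x) \<and> (\<forall>x. Mi (M x) = x)
     \<and> F t = (\<lambda>z. M (P (L z)))" if t: "0 < t" "t \<le> 1" for t
  proof -
    define l where "l = complex_of_real (t ^ q)"
    define k where "k = complex_of_real (t ^ p)"
    define K where "K = complex_of_real (t ^ (p * q)) * b * cnj c2"
    have l0: "l \<noteq> 0" "k \<noteq> 0" using t by (auto simp: l_def k_def)
    have K0: "K \<noteq> 0" using t assms(4,6) by (auto simp: K_def)
    have e1: "l ^ p = complex_of_real (t ^ (p * q))" unfolding l_def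
      by (simp add: power_mult[symmetric] mult.commute)
    have e3: "k ^ q = complex_of_real (t ^ (p * q))" unfolding k_def
      by (simp add: power_mult[symmetric])
    have e2: "complex_of_real (t ^ ((p - 1) * q)) * l = complex_of_real (t ^ (p * q))"
    proof -
      have "(p - 1) * q + q = p * q" using assms(1) by (simp add: diff_mult_distrib)
      then show ?thesis unfolding l_def by (metis of_real_mult power_add)
    qed
    have e4: "complex_of_real (t ^ ((q - 1) * p)) * k = complex_of_real (t ^ (p * q))"
    proof -
      have "(q - 1) * p + p = p * q" using assms(2) by (cases q) simp_all
      then show ?thesis unfolding k_def by (metis of_real_mult power_add)
    qed
    have cl: "cnj l = l" "cnj k = k" by (simp_all add: l_def k_def)
    have id: "F t (l * c1 * u, k * c2 * v) = K * P (u, v)" for u v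
    proof -
      have "F t (l * c1 * u, k * c2 * v) =
         l ^ p * c1 ^ p * u ^ p + k ^ q * c2 ^ q * v ^ q
         + a * (complex_of_real (t ^ ((p - 1) * q)) * l) * cnj c1 * cnj u
         + b * (complex_of_real (t ^ ((q - 1) * p)) * k) * cnj c2 * cnj v"
        unfolding F_def lin_def_def a2_def b2_def by (simp add: power_mult_distrib cl mult_ac)
      also have "\<dots> = complex_of_real (t ^ (p * q)) * (a * cnj c1 * (u ^ p + cnj u) + b * cnj c2 * (v ^ q + cnj v))"
        unfolding e1 e2 e3 e4 assms(7,8) by (simp add: algebra_simps)
      also have "\<dots> = K * P (u, v)"
        unfolding K_def P_def using assms(4,6) by (simp add: field_simps)
      finally show ?thesis .
    qed
    define L where "L = (\<lambda>x::complex \<times> complex. (fst x / (l * c1), snd x / (k * c2)))"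
    define Li where "Li = (\<lambda>x::complex \<times> complex. ((l * c1) * fst x, (k * c2) * snd x))"
    define M where "M = (\<lambda>y::complex. K * y)"
    define Mi where "Mi = (\<lambda>y::complex. y / K)"
    have bl: "bounded_linear L" unfolding L_def
      by (intro bounded_linear_Pair bounded_linear_compose[OF bounded_linear_divide] bounded_linear_fst bounded_linear_snd)
    have bli: "bounded_linear Li" unfolding Li_def
      by (intro bounded_linear_Pair bounded_linear_compose[OF bounded_linear_mult_right] bounded_linear_fst bounded_linear_snd)
    have bm: "bounded_linear M" unfolding M_def by (rule bounded_linear_mult_right)
    have bmi: "bounded_linear Mi" unfolding Mi_def by (rule bounded_linear_divide)
    have inv1: "\<forall>x. L (Li x) = x" "\<forall>x. Li (L x) = x" using l0 assms(5,6) by (auto simp: L_def Li_def)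
    have inv2: "\<forall>x. M (Mi x) = x" "\<forall>x. Mi (M x) = x" using K0 by (auto simp: M_def Mi_def)
    have "F t = (\<lambda>z. M (P (L z)))"
    proof
      fix z :: "complex \<times> complex"
      have "F t z = F t (Li (L z))" using inv1(2) by metis
      also have "\<dots> = M (P (L z))" unfolding Li_def M_def
        by (metis id prod.collapse)
      finally show "F t z = M (P (L z))" .
    qed
    then show ?thesis using bl bli bm bmi inv1 inv2 by blast
  qed
  have exc: "excellent (F t)" if t: "t \<in> {0<..1}" for t
  proof -
    obtain L Li M Mi where h: "bounded_linear L" "bounded_linear Li" "\<forall>x. L (Li x) = x" "\<forall>x. Li (L x) = x"
      "bounded_linear M" "bounded_linear Mi" "\<forall>x. M (Mi x) = x" "\<forall>x. Mi (M x) = x"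
      "F t = (\<lambda>z. M (P (L z)))" using key[of t] t by (simp only: greaterThanAtMost_iff) blast
    have sP: "smooth_on UNIV P" using assms(9) unfolding excellent_def P_def by blast
    have "smooth_on UNIV (\<lambda>z. M (P (L z)))"
      by (rule smooth_post[OF h(5) smooth_pre[OF h(1) sP]]) auto
    moreover have "\<exists>N \<in> {regular_form, definite_fold_form, indefinite_fold_form,
                  cusp_plus_form, cusp_minus_form}. locally_of_form (\<lambda>z. M (P (L z))) x N" for x
    proof -
      obtain N where N: "N \<in> {regular_form, definite_fold_form, indefinite_fold_form,
                  cusp_plus_form, cusp_minus_form}" "locally_of_form P (L x) N"
        using assms(9) unfolding excellent_def P_def by blast
      have "locally_of_form (\<lambda>z. M (P (L z))) (Li (L x)) N"
        by (rule lof_transfer[OF h(1,2) _ _ h(5,6)]) (use h N in auto)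
      then show ?thesis using N(1) h(4) by auto
    qed
    ultimately show ?thesis unfolding excellent_def h(9) by blast
  qed
  have fold: "\<not> has_definite_fold (F t)" if t: "t \<in> {0<..1}" and nf: "\<not> has_definite_fold P" for t
  proof
    assume "has_definite_fold (F t)"
    then obtain x where x: "locally_of_form (F t) x definite_fold_form" unfolding has_definite_fold_def by blast
    obtain L Li M Mi where h: "bounded_linear L" "bounded_linear Li" "\<forall>x. L (Li x) = x" "\<forall>x. Li (L x) = x"
      "bounded_linear M" "bounded_linear Mi" "\<forall>x. M (Mi x) = x" "\<forall>x. Mi (M x) = x"
      "F t = (\<lambda>z. M (P (L z)))" using key[of t] t by (simp only: greaterThanAtMost_iff) blast
    have "locally_of_form (\<lambda>z. Mi (F t (Li z))) (L x) definite_fold_form"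
      by (rule lof_transfer[OF h(2,1) _ _ h(6,5)]) (use h x in auto)
    moreover have "(\<lambda>z. Mi (F t (Li z))) = P" using h by auto
    ultimately show False using nf unfolding has_definite_fold_def by metis
  qed
  show ?thesis
    apply (rule exI[of _ "\<lambda>_. 0"], rule exI[of _ "\<lambda>_. 0"], rule exI[of _ a2], rule exI[of _ b2])
    using def exc one fold unfolding F_def P_def by blast
qed


end
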